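(* Let $(X,\tau)$ be a locally convex Hausdorff space, $\widetilde{\tau}$ a locally convex Hausdorff topology on $X$, and suppose $(X,\widetilde{\gamma})$, $\widetilde{\gamma}=\widetilde{\gamma}(\tau,\widetilde{\tau})$, satisfies $(\mathrm{B}\tau\mathrm{B}\widetilde{\gamma})$. Then $(X,\widetilde{\gamma})$ is a semi-Montel space if and only if $(X,\tau)$ satisfies (BBC) for $\widetilde{\tau}$.
   Context: lcH = locally convex Hausdorff. (BBC) for $\widetilde{\tau}$: every $\tau$-bounded subset of $X$ is contained in an absolutely convex $\tau$-bounded $\widetilde{\tau}$-compact set. $\widetilde{\gamma}(\tau,\widetilde{\tau})$: the finest lcH topology on $X$ coinciding with $\widetilde{\tau}$ on all $\tau$-bounded sets; $(X,\widetilde{\gamma})$ satisfies $(\mathrm{B}\tau\mathrm{B}\widetilde{\gamma})$ if a subset of $X$ is $\tau$-bounded iff it is $\widetilde{\gamma}$-bounded. *)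

theory Defs
  imports "HOL-Analysis.Analysis"
begin

definition vector_topology :: "'a::real_vector topology \<Rightarrow> bool" where
  "vector_topology T \<longleftrightarrow> topspace T = UNIV \<and>
     continuous_map (prod_topology T T) T (\<lambda>(x, y). x + y) \<and>
     continuous_map (prod_topology euclideanreal T) T (\<lambda>(a, x). a *\<^sub>R x)"

definition lcH_topology :: "'a::real_vector topology \<Rightarrow> bool" where
  "lcH_topology T \<longleftrightarrow> vector_topology T \<and> Hausdorff_space T \<and>
     (\<forall>U. openin T U \<and> 0 \<in> U \<longrightarrow> (\<exists>V. openin T V \<and> 0 \<in> V \<and> convex V \<and> V \<subseteq> U))"

definition balanced_set :: "'a::real_vector set \<Rightarrow> bool" where
  "balanced_set S \<longleftrightarrow> (\<forall>a x. \<bar>a\<bar> \<le> 1 \<and> x \<in> S \<longrightarrow> a *\<^sub>R x \<in> S)"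

definition absolutely_convex :: "'a::real_vector set \<Rightarrow> bool" where
  "absolutely_convex S \<longleftrightarrow> convex S \<and> balanced_set S"

definition tvs_bounded :: "'a::real_vector topology \<Rightarrow> 'a set \<Rightarrow> bool" where
  "tvs_bounded T S \<longleftrightarrow>
     (\<forall>U. openin T U \<and> 0 \<in> U \<longrightarrow> (\<exists>t>0. S \<subseteq> (\<lambda>x. t *\<^sub>R x) ` U))"

definition is_gamma_tilde :: "'a::real_vector topology \<Rightarrow> 'a topology \<Rightarrow> 'a topology \<Rightarrow> bool" where
  "is_gamma_tilde t tt g \<longleftrightarrow>
     lcH_topology g \<and>
     (\<forall>B. tvs_bounded t B \<longrightarrow> subtopology g B = subtopology tt B) \<and>
     (\<forall>s. lcH_topology s \<and> (\<forall>B. tvs_bounded t B \<longrightarrow> subtopology s B = subtopology tt B)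
          \<longrightarrow> (\<forall>U. openin s U \<longrightarrow> openin g U))"

definition semi_Montel :: "'a::real_vector topology \<Rightarrow> bool" where
  "semi_Montel T \<longleftrightarrow> (\<forall>B. tvs_bounded T B \<longrightarrow> compactin T (T closure_of B))"

definition BBC :: "'a::real_vector topology \<Rightarrow> 'a topology \<Rightarrow> bool" where
  "BBC t tt \<longleftrightarrow> (\<forall>B. tvs_bounded t B \<longrightarrow>
     (\<exists>K. B \<subseteq> K \<and> absolutely_convex K \<and> tvs_bounded t K \<and> compactin tt K))"

definition same_bounded :: "'a::real_vector topology \<Rightarrow> 'a topology \<Rightarrow> bool" where
  "same_bounded t g \<longleftrightarrow> (\<forall>B. tvs_bounded t B \<longleftrightarrow> tvs_bounded g B)"

end

theory Submission
  imports Defs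
begin

lemma vt_scale:
  assumes "vector_topology T"
  shows "continuous_map T T (\<lambda>x. c *\<^sub>R x)"
proof -
  have 1: "continuous_map T (prod_topology euclideanreal T) (\<lambda>x. (c, x))"
    by (intro continuous_map_pairedI continuous_map_id continuous_map_const[THEN iffD2]) auto
  have "continuous_map T T ((\<lambda>(a, x). a *\<^sub>R x) \<circ> (\<lambda>x. (c, x)))"
    using continuous_map_compose[OF 1] assms unfolding vector_topology_def by blast
  then show ?thesis by (simp add: o_def)
qed

lemma vt_ray:
  assumes "vector_topology T"
  shows "continuous_map euclideanreal T (\<lambda>a. a *\<^sub>R x)"
proof -
  have 1: "continuous_map euclideanreal (prod_topology euclideanreal T) (\<lambda>a. (a, x))"
    using assms unfolding vector_topology_def
    by (intro continuous_map_pairedI continuous_map_id continuous_map_const[THEN iffD2]) auto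
  have "continuous_map euclideanreal T ((\<lambda>(a, x). a *\<^sub>R x) \<circ> (\<lambda>a. (a, x)))"
    using continuous_map_compose[OF 1] assms unfolding vector_topology_def by blast
  then show ?thesis by (simp add: o_def)
qed

lemma vt_comb:
  assumes "vector_topology T"
  shows "continuous_map (prod_topology T T) T (\<lambda>(x,y). u *\<^sub>R x + v *\<^sub>R y)"
proof -
  have 1: "continuous_map (prod_topology T T) (prod_topology T T) (\<lambda>(x,y). (u *\<^sub>R x, v *\<^sub>R y))"
    using vt_scale[OF assms] by (simp add: continuous_map_prod_top)
  have "continuous_map (prod_topology T T) T ((\<lambda>(x, y). x + y) \<circ> (\<lambda>(x,y). (u *\<^sub>R x, v *\<^sub>R y)))"
    using continuous_map_compose[OF 1] assms unfolding vector_topology_def by blast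
  then show ?thesis by (simp add: o_def case_prod_unfold)
qed

lemma vt_open_scale:
  assumes "vector_topology T" "openin T U" "c \<noteq> 0"
  shows "openin T ((\<lambda>x. c *\<^sub>R x) ` U)"
proof -
  have "(\<lambda>x. c *\<^sub>R x) ` U = {x \<in> topspace T. (1/c) *\<^sub>R x \<in> U}"
    using assms(1,3) unfolding vector_topology_def
    apply (auto simp: image_iff)
    apply (rule_tac x="(1/c) *\<^sub>R x" in bexI) apply auto done
  then show ?thesis
    using openin_continuous_map_preimage[OF vt_scale[OF assms(1)] assms(2)] by simp
qed

lemma lch_nbhd:
  assumes "lcH_topology T" "openin T U" "0 \<in> U"
  shows "\<exists>W. openin T W \<and> 0 \<in> W \<and> convex W \<and> balanced_set W \<and> W \<subseteq> U"
proof -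
  have vt: "vector_topology T" using assms(1) lcH_topology_def by blast
  obtain V where V: "openin T V" "0 \<in> V" "convex V" "V \<subseteq> U"
    using assms unfolding lcH_topology_def by blast
  define W where "W = V \<inter> {x. (-1) *\<^sub>R x \<in> V}"
  have "openin T {x \<in> topspace T. (-1) *\<^sub>R x \<in> V}"
    by (rule openin_continuous_map_preimage[OF vt_scale[OF vt] V(1)])
  then have oW: "openin T W" using vt V(1) unfolding W_def vector_topology_def
    by (simp add: openin_Int)
  have cW: "convex W" unfolding W_def
  proof (rule convex_Int[OF V(3)])
    show "convex {x. (-1) *\<^sub>R x \<in> V}"
      using V(3) unfolding convex_def
      by (metis (no_types, lifting) mem_Collect_eq scaleR_minus1_left scaleR_minus_right minus_add_distrib)
  qed
  have bW: "balanced_set W" unfolding balanced_set_def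
  proof (intro allI impI)
    fix a x assume h: "\<bar>a\<bar> \<le> (1::real) \<and> x \<in> W"
    have k: "b *\<^sub>R x \<in> V" if "\<bar>b\<bar> \<le> 1" for b
    proof -
      have "((1+b)/2) *\<^sub>R x + ((1-b)/2) *\<^sub>R (-x) \<in> V"
        apply (rule convexD[OF V(3)]) using h that unfolding W_def by (auto simp: field_simps)
      moreover have "((1+b)/2) *\<^sub>R x + ((1-b)/2) *\<^sub>R (-x) = b *\<^sub>R x"
        by (simp add: algebra_simps scaleR_left_distrib[symmetric] divide_simps)
      ultimately show ?thesis by simp
    qed
    show "a *\<^sub>R x \<in> W" unfolding W_def using k[of a] k[of "-a"] h by auto
  qed
  show ?thesis using oW cW bW V unfolding W_def by auto
qed

lemma vt_absorb:
  assumes "vector_topology T" "openin T W" "0 \<in> W"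
  shows "\<exists>a>0. a *\<^sub>R x \<in> W"
proof -
  have "openin euclideanreal {a \<in> topspace euclideanreal. a *\<^sub>R x \<in> W}"
    by (rule openin_continuous_map_preimage[OF vt_ray[OF assms(1)] assms(2)])
  then have o: "open {a. a *\<^sub>R x \<in> W}" by simp
  have "(0::real) \<in> {a. a *\<^sub>R x \<in> W}" using assms(3) by simp
  then obtain e where e: "e > 0" "ball 0 e \<subseteq> {a. a *\<^sub>R x \<in> W}"
    using o open_contains_ball by blast
  moreover have "e/2 \<in> ball (0::real) e" using e(1) by simp
  ultimately have "(e/2) *\<^sub>R x \<in> W" by blast
  then show ?thesis using e(1) by (intro exI[of _ "e/2"]) auto
qed

lemma balanced_scale_mono:
  assumes "balanced_set W" "0 < s" "s \<le> r"
  shows "(\<lambda>x. s *\<^sub>R x) ` W \<subseteq> (\<lambda>x. r *\<^sub>R x) ` W"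
proof
  fix y assume "y \<in> (\<lambda>x. s *\<^sub>R x) ` W"
  then obtain x where x: "x \<in> W" "y = s *\<^sub>R x" by auto
  have "(s/r) *\<^sub>R x \<in> W" using assms x(1) unfolding balanced_set_def by auto
  moreover have "y = r *\<^sub>R ((s/r) *\<^sub>R x)" using x(2) assms by simp
  ultimately show "y \<in> (\<lambda>x. r *\<^sub>R x) ` W" by blast
qed

lemma lch_compact_bounded:
  assumes "lcH_topology T" "compactin T K"
  shows "tvs_bounded T K"
  unfolding tvs_bounded_def
proof (intro allI impI)
  fix U assume U: "openin T U \<and> 0 \<in> U"
  have vt: "vector_topology T" using assms(1) lcH_topology_def by blast
  obtain W where W: "openin T W" "0 \<in> W" "convex W" "balanced_set W" "W \<subseteq> U"
    using lch_nbhd[OF assms(1)] U by blast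
  define f where "f = (\<lambda>n::nat. (\<lambda>x. real n *\<^sub>R x) ` W)"
  have cov: "K \<subseteq> \<Union>(f ` {1..})"
  proof
    fix x assume "x \<in> K"
    obtain a where a: "a > 0" "a *\<^sub>R x \<in> W" using vt_absorb[OF vt W(1,2)] by blast
    define n where "n = nat \<lceil>1/a\<rceil> + 1"
    have n: "real n \<ge> 1/a" "n \<ge> 1"
      unfolding n_def using real_nat_ceiling_ge[of "1/a"] by auto
    have np: "real n > 0" using n by simp
    have le: "\<bar>1 / (real n * a)\<bar> \<le> 1" using n a np
      by (simp add: field_simps)
    have "(1 / (real n * a)) *\<^sub>R (a *\<^sub>R x) \<in> W"
      using W(4) a(2) le unfolding balanced_set_def by blast
    moreover have "x = real n *\<^sub>R ((1 / (real n * a)) *\<^sub>R (a *\<^sub>R x))"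
      using a np by simp
    ultimately show "x \<in> \<Union>(f ` {1..})" using n unfolding f_def by blast
  qed
  have op: "\<forall>B\<in>f ` {1..}. openin T B"
    unfolding f_def using vt_open_scale[OF vt W(1)] by auto
  obtain F where F: "finite F" "F \<subseteq> f ` {1..}" "K \<subseteq> \<Union>F"
  proof -
    have "\<forall>\<U>. (\<forall>B\<in>\<U>. openin T B) \<and> K \<subseteq> \<Union>\<U> \<longrightarrow> (\<exists>\<F>. finite \<F> \<and> \<F> \<subseteq> \<U> \<and> K \<subseteq> \<Union>\<F>)"
      using assms(2) unfolding compactin_def by blast
    from this[rule_format, of "f ` {1..}"] cov op show ?thesis using that by blast
  qed
  from finite_subset_image[OF F(1,2)] obtain G where G: "G \<subseteq> {1..}" "finite G" "F = f ` G"
    by (elim exE conjE) simp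
  define N where "N = Max (insert 1 G)"
  have N1: "N \<ge> 1" unfolding N_def using G by simp
  have "\<forall>n\<in>G. f n \<subseteq> f N"
  proof
    fix n assume "n \<in> G"
    then have "n \<le> N" "n \<ge> 1" unfolding N_def using G by auto
    then show "f n \<subseteq> f N" unfolding f_def
      by (intro balanced_scale_mono[OF W(4)]) auto
  qed
  then have "K \<subseteq> f N" using F G by blast
  also have "\<dots> \<subseteq> (\<lambda>x. real N *\<^sub>R x) ` U" unfolding f_def using W(5) by blast
  finally show "\<exists>t>0. K \<subseteq> (\<lambda>x. t *\<^sub>R x) ` U" using N1
    by (intro exI[of _ "real N"]) auto
qed

lemma closure_absconv:
  assumes "vector_topology T" "absolutely_convex A"
  shows "absolutely_convex (T closure_of A)"
proof -
  have cv: "convex (T closure_of A)"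
  proof (rule convexI)
    fix x y u v assume h0: "x \<in> T closure_of A" "y \<in> T closure_of A" "(0::real) \<le> u" "0 \<le> v" "u + v = 1"
    then have h: "x \<in> T closure_of A" "y \<in> T closure_of A" "(0::real) \<le> u \<and> 0 \<le> v \<and> u + v = 1" by auto
    let ?f = "\<lambda>(x,y). u *\<^sub>R x + v *\<^sub>R y"
    have "?f ` (prod_topology T T closure_of (A \<times> A)) \<subseteq> T closure_of (?f ` (A \<times> A))"
      by (rule continuous_map_image_closure_subset[OF vt_comb[OF assms(1)]])
    moreover have "?f ` (A \<times> A) \<subseteq> A"
      using assms(2) h(3) unfolding absolutely_convex_def convex_def by auto
    ultimately have "?f ` ((T closure_of A) \<times> (T closure_of A)) \<subseteq> T closure_of A"
    proof -
      assume a1: "?f ` (prod_topology T T closure_of (A \<times> A)) \<subseteq> T closure_of (?f ` (A \<times> A))"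
        and a2: "?f ` (A \<times> A) \<subseteq> A"
      have "T closure_of (?f ` (A \<times> A)) \<subseteq> T closure_of A" by (rule closure_of_mono[OF a2])
      then show ?thesis using a1 unfolding closure_of_Times by (rule order_trans[rotated])
    qed
    then show "u *\<^sub>R x + v *\<^sub>R y \<in> T closure_of A" using h by auto
  qed
  have bl: "balanced_set (T closure_of A)"
    unfolding balanced_set_def
  proof (intro allI impI)
    fix a x assume h: "\<bar>a\<bar> \<le> (1::real) \<and> x \<in> T closure_of A"
    have "(\<lambda>x. a *\<^sub>R x) ` (T closure_of A) \<subseteq> T closure_of ((\<lambda>x. a *\<^sub>R x) ` A)"
      by (rule continuous_map_image_closure_subset[OF vt_scale[OF assms(1)]])
    moreover have "(\<lambda>x. a *\<^sub>R x) ` A \<subseteq> A"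
      using assms(2) h unfolding absolutely_convex_def balanced_set_def by auto
    ultimately have "(\<lambda>x. a *\<^sub>R x) ` (T closure_of A) \<subseteq> T closure_of A"
      by (metis closure_of_mono order_trans)
    then show "a *\<^sub>R x \<in> T closure_of A" using h by auto
  qed
  show ?thesis using cv bl absolutely_convex_def by blast
qed

lemma sym_convex_balanced:
  assumes "convex V" "\<And>x. x \<in> V \<Longrightarrow> - x \<in> V"
  shows "balanced_set V"
  unfolding balanced_set_def
proof (intro allI impI)
  fix a x assume h: "\<bar>a\<bar> \<le> (1::real) \<and> x \<in> V"
  have "((1+a)/2) *\<^sub>R x + ((1-a)/2) *\<^sub>R (-x) \<in> V"
    apply (rule convexD[OF assms(1)]) using h assms(2) by (auto simp: field_simps)
  moreover have "((1+a)/2) *\<^sub>R x + ((1-a)/2) *\<^sub>R (-x) = a *\<^sub>R x"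
    by (simp add: algebra_simps scaleR_left_distrib[symmetric] divide_simps)
  ultimately show "a *\<^sub>R x \<in> V" by simp
qed

lemma hull_bounded:
  assumes "lcH_topology T" "tvs_bounded T B"
  defines "A \<equiv> convex hull (B \<union> uminus ` B \<union> {0})"
  shows "tvs_bounded T A \<and> absolutely_convex A \<and> B \<subseteq> A"
proof (intro conjI)
  have cA: "convex A" unfolding A_def by simp
  have S1: "B \<union> uminus ` B \<union> {0} \<subseteq> A" unfolding A_def by (rule hull_subset)
  then show "B \<subseteq> A" by (rule subset_trans[rotated]) blast
  have "B \<union> uminus ` B \<union> {0} \<subseteq> uminus ` A"
  proof (intro subsetI)
    fix x assume "x \<in> B \<union> uminus ` B \<union> {0}"
    then have "- x \<in> B \<union> uminus ` B \<union> {0}" by auto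
    then have "- x \<in> A" using S1 by blast
    then show "x \<in> uminus ` A" by (rule rev_image_eqI) simp
  qed
  then have "A \<subseteq> uminus ` A" unfolding A_def
    by (rule hull_minimal) (use convex_negations[OF cA] in \<open>simp add: A_def\<close>)
  then have "\<And>x. x \<in> A \<Longrightarrow> - x \<in> A"
  proof -
    fix x assume "A \<subseteq> uminus ` A" "x \<in> A"
    then obtain y where "y \<in> A" "x = - y" by blast
    then show "- x \<in> A" by simp
  qed
  then show "absolutely_convex A" using sym_convex_balanced cA absolutely_convex_def by blast
  show "tvs_bounded T A" unfolding tvs_bounded_def
  proof (intro allI impI)
    fix U assume U: "openin T U \<and> 0 \<in> U"
    obtain W where W: "openin T W" "0 \<in> W" "convex W" "balanced_set W" "W \<subseteq> U"
      using lch_nbhd[OF assms(1)] U by blast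
    obtain s where s: "s > 0" "B \<subseteq> (\<lambda>x. s *\<^sub>R x) ` W"
      using assms(2) W unfolding tvs_bounded_def by blast
    let ?sW = "(\<lambda>x. s *\<^sub>R x) ` W"
    have c: "convex ?sW" using convex_scaling[OF W(3)] by simp
    have "uminus ` B \<subseteq> ?sW"
    proof
      fix y assume "y \<in> uminus ` B"
      then obtain b where b: "b \<in> B" "y = - b" by auto
      then obtain w where w: "w \<in> W" "b = s *\<^sub>R w" using s by auto
      have "(-1) *\<^sub>R w \<in> W" using W(4) w(1) unfolding balanced_set_def
        by (metis abs_minus_cancel abs_one order_refl)
      moreover have "y = s *\<^sub>R ((-1) *\<^sub>R w)" using b w by simp
      ultimately show "y \<in> ?sW" by blast
    qed
    moreover have "0 \<in> ?sW" using W(2) by (auto intro: image_eqI[of _ _ 0])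
    ultimately have "B \<union> uminus ` B \<union> {0} \<subseteq> ?sW" using s by blast
    then have "A \<subseteq> ?sW" unfolding A_def by (rule hull_minimal) (rule c)
    also have "\<dots> \<subseteq> (\<lambda>x. s *\<^sub>R x) ` U" using W(5) by blast
    finally show "\<exists>t>0. A \<subseteq> (\<lambda>x. t *\<^sub>R x) ` U" using s(1) by blast
  qed
qed

theorem corollary3p14:
  fixes t tt g :: "'a::real_vector topology"
  assumes "lcH_topology t" and "lcH_topology tt"
    and "is_gamma_tilde t tt g"
    and "same_bounded t g"
  shows "semi_Montel g \<longleftrightarrow> BBC t tt"
proof
  have lg: "lcH_topology g" using assms(3) is_gamma_tilde_def by blast
  have vg: "vector_topology g" using lg lcH_topology_def by blast
  have Hg: "Hausdorff_space g" using lg lcH_topology_def by blast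
  have tsg: "topspace g = UNIV" using vg vector_topology_def by blast
  have tstt: "topspace tt = UNIV" using assms(2) lcH_topology_def vector_topology_def by blast
  have sub: "\<And>B. tvs_bounded t B \<Longrightarrow> subtopology g B = subtopology tt B"
    using assms(3) is_gamma_tilde_def by blast
  have cpt: "compactin g K \<longleftrightarrow> compactin tt K" if "tvs_bounded t K" for K
    using sub[OF that] tsg tstt by (simp add: compactin_subspace)
  {
    assume sm: "semi_Montel g"
    show "BBC t tt" unfolding BBC_def
    proof (intro allI impI)
      fix B assume B: "tvs_bounded t B"
      define A where "A = convex hull (B \<union> uminus ` B \<union> {0})"
      have A: "tvs_bounded t A" "absolutely_convex A" "B \<subseteq> A"
        using hull_bounded[OF assms(1) B] A_def by auto
      define K where "K = g closure_of A"
      have "compactin g K" using sm A(1) assms(4) unfolding semi_Montel_def same_bounded_def K_def by blast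
      then have Kb: "tvs_bounded t K" using lch_compact_bounded[OF lg] assms(4) same_bounded_def by blast
      have "B \<subseteq> K" using A(3) closure_of_subset[of A g] tsg unfolding K_def by auto
      moreover have "absolutely_convex K" unfolding K_def by (rule closure_absconv[OF vg A(2)])
      moreover have "compactin tt K" using cpt[OF Kb] \<open>compactin g K\<close> by simp
      ultimately show "\<exists>K. B \<subseteq> K \<and> absolutely_convex K \<and> tvs_bounded t K \<and> compactin tt K"
        using Kb by blast
    qed
  }
  {
    assume bbc: "BBC t tt"
    show "semi_Montel g" unfolding semi_Montel_def
    proof (intro allI impI)
      fix B assume "tvs_bounded g B"
      then have B: "tvs_bounded t B" using assms(4) same_bounded_def by blast
      then obtain K where K: "B \<subseteq> K" "tvs_bounded t K" "compactin tt K"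
        using bbc unfolding BBC_def by blast
      have Kc: "compactin g K" using cpt[OF K(2)] K(3) by simp
      have "closedin g K" using compactin_imp_closedin[OF Hg Kc] .
      then have "g closure_of B \<subseteq> K" using K(1) closure_of_minimal by blast
      then show "compactin g (g closure_of B)"
        using closed_compactin[OF Kc] closedin_closure_of by blast
    qed
  }
qed

end
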